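(* Let $R$ be a commutative ring with identity, $M$ an $R$-module and $a\in R$. Then the $R$-module $M/a\Gamma_{a}(M)$ is $a$-reduced.
   Context: $\Gamma_{a}(M)=\{m\in M \mid a^{k}m=0 \text{ for some } k\in\mathbb{Z}^{+}\}$ and $a\Gamma_{a}(M)=\{am \mid m\in \Gamma_a(M)\}$, a submodule of $M$. An $R$-module $N$ is $a$-reduced if for all $n\in N$, $a^{2}n=0$ implies $an=0$. *)

theory Defs
  imports Complex_Main
begin

text \<open>Modules: we use the locale module of HOL (theory Modules), with ring
  'a :: comm_ring_1 and module carrier the type 'b :: ab_group_add, scalar action scale.\<close>

definition Gamma :: "('a::comm_ring_1 \<Rightarrow> 'b::ab_group_add \<Rightarrow> 'b) \<Rightarrow> 'a \<Rightarrow> 'b set" where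
  "Gamma scale a = {m. \<exists>k::nat. k > 0 \<and> scale (a ^ k) m = 0}"

definition a_Gamma :: "('a::comm_ring_1 \<Rightarrow> 'b::ab_group_add \<Rightarrow> 'b) \<Rightarrow> 'a \<Rightarrow> 'b set" where
  "a_Gamma scale a = {scale a m | m. m \<in> Gamma scale a}"

definition coset :: "'b::ab_group_add set \<Rightarrow> 'b \<Rightarrow> 'b set" where
  "coset N m = (\<lambda>n. m + n) ` N"

definition quot_carrier :: "'b::ab_group_add set \<Rightarrow> 'b set set" where
  "quot_carrier N = range (coset N)"

definition quot_scale :: "('a \<Rightarrow> 'b::ab_group_add \<Rightarrow> 'b) \<Rightarrow> 'b set \<Rightarrow> 'a \<Rightarrow> 'b set \<Rightarrow> 'b set" where
  "quot_scale scale N r C = coset N (scale r (SOME m. m \<in> C))"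

definition quot_zero :: "'b::ab_group_add set \<Rightarrow> 'b set" where
  "quot_zero N = coset N 0"

definition a_reduced :: "'c set \<Rightarrow> ('a::comm_ring_1 \<Rightarrow> 'c \<Rightarrow> 'c) \<Rightarrow> 'c \<Rightarrow> 'a \<Rightarrow> bool" where
  "a_reduced X s z a \<longleftrightarrow> (\<forall>n\<in>X. s (a ^ 2) n = z \<longrightarrow> s a n = z)"

end

theory Submission
  imports Defs
begin

context module
begin

lemma G_pow: "scale (a ^ k) m = 0 \<Longrightarrow> k \<le> j \<Longrightarrow> scale (a ^ j) m = 0"
proof -
  assume h: "scale (a ^ k) m = 0" "k \<le> j"
  then have "a ^ j = a ^ (j - k) * a ^ k" by (simp add: power_add[symmetric])
  then show ?thesis using h by (simp add: scale_scale[symmetric])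
qed

lemma G_zero: "0 \<in> Gamma scale a"
  unfolding Gamma_def by (rule CollectI, rule exI[of _ 1]) simp

lemma G_add: "x \<in> Gamma scale a \<Longrightarrow> y \<in> Gamma scale a \<Longrightarrow> x + y \<in> Gamma scale a"
proof -
  assume "x \<in> Gamma scale a" "y \<in> Gamma scale a"
  then obtain k l where k: "k > 0" "scale (a ^ k) x = 0" and l: "l > 0" "scale (a ^ l) y = 0"
    unfolding Gamma_def by auto
  have "scale (a ^ max k l) x = 0" by (rule G_pow[OF k(2)]) simp
  moreover have "scale (a ^ max k l) y = 0" by (rule G_pow[OF l(2)]) simp
  ultimately have "scale (a ^ max k l) (x + y) = 0" by (simp add: scale_right_distrib)
  then show ?thesis unfolding Gamma_def using k by (auto intro!: exI[of _ "max k l"])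
qed

lemma G_scale: "x \<in> Gamma scale a \<Longrightarrow> scale r x \<in> Gamma scale a"
proof -
  assume "x \<in> Gamma scale a"
  then obtain k where k: "k > 0" "scale (a ^ k) x = 0" unfolding Gamma_def by auto
  have "scale (a ^ k) (scale r x) = scale r (scale (a ^ k) x)" by (simp add: mult.commute)
  then show ?thesis unfolding Gamma_def using k by auto
qed

lemma G_neg: "x \<in> Gamma scale a \<Longrightarrow> - x \<in> Gamma scale a"
  using G_scale[of x a "-1"] by simp

lemma N_zero: "0 \<in> a_Gamma scale a"
  unfolding a_Gamma_def using G_zero by force

lemma N_add: "x \<in> a_Gamma scale a \<Longrightarrow> y \<in> a_Gamma scale a \<Longrightarrow> x + y \<in> a_Gamma scale a"
  unfolding a_Gamma_def using G_add by (force simp: scale_right_distrib[symmetric])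

lemma N_scale: "x \<in> a_Gamma scale a \<Longrightarrow> scale r x \<in> a_Gamma scale a"
  unfolding a_Gamma_def using G_scale
  by (auto simp: mult.commute) (metis scale_scale mult.commute)

lemma N_neg: "x \<in> a_Gamma scale a \<Longrightarrow> - x \<in> a_Gamma scale a"
  using N_scale[of x a "-1"] by simp

lemma coset_eq:
  assumes "x - y \<in> a_Gamma scale a"
  shows "coset (a_Gamma scale a) x = coset (a_Gamma scale a) y"
proof -
  have A: "x + n \<in> coset (a_Gamma scale a) y" if "n \<in> a_Gamma scale a" for n
  proof -
    have "x - y + n \<in> a_Gamma scale a" using N_add assms that by blast
    moreover have "x + n = y + (x - y + n)" by simp
    ultimately show ?thesis unfolding coset_def by blast
  qed
  have B: "y + n \<in> coset (a_Gamma scale a) x" if "n \<in> a_Gamma scale a" for n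
  proof -
    have "-(x - y) + n \<in> a_Gamma scale a" using N_add N_neg assms that by blast
    moreover have "y + n = x + (-(x - y) + n)" by simp
    ultimately show ?thesis unfolding coset_def by blast
  qed
  show ?thesis using A B unfolding coset_def by blast
qed

lemma coset_mem: "y \<in> coset (a_Gamma scale a) x \<Longrightarrow> y - x \<in> a_Gamma scale a"
  unfolding coset_def by auto

lemma self_mem: "x \<in> coset (a_Gamma scale a) x"
  unfolding coset_def using N_zero by force

end

theorem mainTheorem4:
  fixes scale :: "'a::comm_ring_1 \<Rightarrow> 'b::ab_group_add \<Rightarrow> 'b" and a :: 'a
  assumes "module scale"
  shows "a_reduced (quot_carrier (a_Gamma scale a)) (quot_scale scale (a_Gamma scale a))
           (quot_zero (a_Gamma scale a)) a"
proof -
  interpret module scale by fact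
  define N where "N = a_Gamma scale a"
  have qs: "quot_scale scale N r (coset N m) = coset N (scale r m)" for r m
  proof -
    have "(SOME x. x \<in> coset N m) \<in> coset N m"
      by (rule someI[of _ m]) (simp add: N_def self_mem)
    then have "(SOME x. x \<in> coset N m) - m \<in> N" by (simp add: N_def coset_mem)
    then have "scale r ((SOME x. x \<in> coset N m) - m) \<in> N" by (simp add: N_def N_scale)
    then show ?thesis unfolding quot_scale_def N_def
      by (intro coset_eq) (simp add: scale_right_diff_distrib N_def)
  qed
  show ?thesis unfolding a_reduced_def quot_carrier_def quot_zero_def
  proof (intro ballI impI)
    fix C assume "C \<in> range (coset (a_Gamma scale a))"
    then obtain m where C: "C = coset (a_Gamma scale a) m" by blast
    assume "quot_scale scale (a_Gamma scale a) (a\<^sup>2) C = coset (a_Gamma scale a) 0"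
    then have h0: "quot_scale scale (a_Gamma scale a) (a ^ 2) (coset (a_Gamma scale a) m) = coset (a_Gamma scale a) 0"
      using C by simp
    then have h: "quot_scale scale N (a ^ 2) (coset N m) = coset N 0" by (simp add: N_def C)
    have "scale (a^2) m \<in> coset N 0" using h qs self_mem[of "scale (a^2) m"] N_def by metis
    then have "scale (a^2) m \<in> N" using coset_mem[of _ a 0] N_def by simp
    then obtain g k where g: "scale (a^2) m = scale a g" "k > 0" "scale (a ^ k) g = 0"
      unfolding N_def a_Gamma_def Gamma_def by auto
    have "scale a (scale a m - g) = 0"
      using g(1) by (simp add: scale_right_diff_distrib power2_eq_square)
    then have "scale a m - g \<in> Gamma scale a" unfolding Gamma_def by (auto intro!: exI[of _ 1])
    moreover have "g \<in> Gamma scale a" using g unfolding Gamma_def by auto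
    ultimately have "scale a m \<in> Gamma scale a" using G_add by fastforce
    then obtain j where j: "j > 0" "scale (a ^ j) (scale a m) = 0" unfolding Gamma_def by auto
    have "scale (a ^ Suc j) m = 0" using j(2) by (simp add: mult.commute)
    then have "m \<in> Gamma scale a" unfolding Gamma_def by blast
    then have "scale a m \<in> N" unfolding N_def a_Gamma_def by blast
    then show "quot_scale scale (a_Gamma scale a) a C = coset (a_Gamma scale a) 0"
      unfolding C qs[unfolded N_def] N_def by (intro coset_eq) simp
  qed
qed

end
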